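(* Assume $G$ is simply laced. Let $\varpi$ be a minuscule fundamental weight, $\bar\phi\in W/W_{P_\varpi}$, $\phi$ the minimal length element of $\bar\phi$, $\phi=s_{\gamma_1}\cdots s_{\gamma_n}$ a reduced expression with simple roots $\gamma_k$, $\beta_k=i(\gamma_k)$, $\alpha_1=\beta_1$ and $\alpha_k=s_{\beta_1}\cdots s_{\beta_{k-1}}(\beta_k)$. Let $\beta$ be the unique simple root with $\langle\beta^\vee,i(\varpi)\rangle=1$. Then for every $i\in[1,n]$, $$\sum_{k\in[i+1,n],\ \beta_k=\beta}\langle\alpha_i^\vee,\alpha_k\rangle=\begin{cases}1 & \text{if }\beta_i\neq\beta,\\ 0&\text{if }\beta_i=\beta.\end{cases}$$
   Context: $G$ is a semisimple algebraic group with maximal torus $T$, Borel subgroup $B$, simple roots $S$, Weyl group $W$ with longest element $w_0$; $s_\alpha$ is the reflection and $\alpha^\vee$ the coroot of a root $\alpha$. The Weyl involution $i$ sends a simple root $\gamma$ to $-w_0(\gamma)$ and a fundamental weight $\varpi$ to $-w_0(\varpi)$. A fundamental weight $\varpi$ is minuscule if $\langle\alpha^\vee,\varpi\rangle\le1$ for all positive roots $\alpha$; $P_\varpi$ is the associated maximal parabolic subgroup and $W_{P_\varpi}$ its Weyl group. *)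

theory Defs
  imports "HOL-Analysis.Analysis"
begin

text \<open>The root system of the semisimple group G is modelled
  as a reduced crystallographic root system R spanning a Euclidean space, with a base S
  (simple roots). Weyl group elements are linear maps of the space.\<close>

definition copair :: "'a::real_inner \<Rightarrow> 'a \<Rightarrow> real" where
  "copair \<alpha> v = 2 * (v \<bullet> \<alpha>) / (\<alpha> \<bullet> \<alpha>)"

definition refl :: "'a::real_inner \<Rightarrow> 'a \<Rightarrow> 'a" where
  "refl \<alpha> v = v - copair \<alpha> v *\<^sub>R \<alpha>"

definition root_system :: "'a::euclidean_space set \<Rightarrow> bool" where
  "root_system R \<longleftrightarrow> finite R \<and> 0 \<notin> R \<and> span R = UNIV \<and>
     (\<forall>\<alpha>\<in>R. refl \<alpha> ` R \<subseteq> R) \<and>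
     (\<forall>\<alpha>\<in>R. \<forall>\<beta>\<in>R. copair \<alpha> \<beta> \<in> \<int>) \<and>
     (\<forall>\<alpha>\<in>R. \<forall>c. c *\<^sub>R \<alpha> \<in> R \<longrightarrow> c = 1 \<or> c = -1)"

definition simply_laced :: "'a::euclidean_space set \<Rightarrow> bool" where
  "simply_laced R \<longleftrightarrow> (\<forall>\<alpha>\<in>R. \<forall>\<beta>\<in>R. \<beta> \<noteq> \<alpha> \<and> \<beta> \<noteq> -\<alpha> \<longrightarrow> copair \<alpha> \<beta> \<in> {-1, 0, 1})"

definition pos_roots :: "'a::euclidean_space set \<Rightarrow> 'a set \<Rightarrow> 'a set" where
  "pos_roots R S = {\<alpha>\<in>R. \<exists>c::'a \<Rightarrow> nat. \<alpha> = (\<Sum>s\<in>S. real (c s) *\<^sub>R s)}"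

definition is_base :: "'a::euclidean_space set \<Rightarrow> 'a set \<Rightarrow> bool" where
  "is_base R S \<longleftrightarrow> S \<subseteq> R \<and> independent S \<and>
     (\<forall>\<alpha>\<in>R. \<alpha> \<in> pos_roots R S \<or> - \<alpha> \<in> pos_roots R S)"

definition wordprod :: "'a::real_inner list \<Rightarrow> 'a \<Rightarrow> 'a" where
  "wordprod gs = foldr (\<circ>) (map refl gs) id"

definition weyl :: "'a::real_inner set \<Rightarrow> ('a \<Rightarrow> 'a) set" where
  "weyl S = {wordprod gs | gs. set gs \<subseteq> S}"

definition wlen :: "'a::real_inner set \<Rightarrow> ('a \<Rightarrow> 'a) \<Rightarrow> nat" where
  "wlen S w = (LEAST n. \<exists>gs. set gs \<subseteq> S \<and> length gs = n \<and> wordprod gs = w)"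

definition longest :: "'a::real_inner set \<Rightarrow> 'a \<Rightarrow> 'a" where
  "longest S = (THE w. w \<in> weyl S \<and> (\<forall>v\<in>weyl S. wlen S v \<le> wlen S w))"

definition weyl_inv :: "'a::real_inner set \<Rightarrow> 'a \<Rightarrow> 'a" where
  "weyl_inv S x = - longest S x"

definition fundamental_weight :: "'a::real_inner set \<Rightarrow> 'a \<Rightarrow> bool" where
  "fundamental_weight S \<omega> \<longleftrightarrow>
     (\<exists>\<gamma>\<in>S. \<forall>\<delta>\<in>S. copair \<delta> \<omega> = (if \<delta> = \<gamma> then 1 else 0))"

definition minuscule :: "'a::euclidean_space set \<Rightarrow> 'a set \<Rightarrow> 'a \<Rightarrow> bool" where
  "minuscule R S \<omega> \<longleftrightarrow> fundamental_weight S \<omega> \<and>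
     (\<forall>\<alpha>\<in>pos_roots R S. copair \<alpha> \<omega> \<le> 1)"

text \<open>Weyl group W_P of the maximal parabolic P_varpi: generated by the simple
  reflections s_gamma with gamma orthogonal (coroot pairing 0) to varpi.\<close>
definition parabolic_weyl :: "'a::real_inner set \<Rightarrow> 'a \<Rightarrow> ('a \<Rightarrow> 'a) set" where
  "parabolic_weyl S \<omega> = weyl {\<gamma>\<in>S. copair \<gamma> \<omega> = 0}"

text \<open>The roots alpha_k = s_{b_1} ... s_{b_(k-1)} (b_k), 1-based index k.\<close>
definition alpha_seq :: "'a::real_inner list \<Rightarrow> nat \<Rightarrow> 'a" where
  "alpha_seq bs k = wordprod (take (k - 1) bs) (bs ! (k - 1))"

end

theory Submission
  imports Defs
begin


lemma copair_add: "copair a (x + y) = copair a x + copair a y"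
  by (simp add: copair_def inner_add_left add_divide_distrib)
lemma copair_diff: "copair a (x - y) = copair a x - copair a y"
  by (simp add: copair_def inner_diff_left diff_divide_distrib)
lemma copair_scale: "copair a (c *\<^sub>R x) = c * copair a x"
  by (simp add: copair_def)
lemma copair_neg: "copair a (- x) = - copair a x"
  by (simp add: copair_def)
lemma copair_self: "a \<noteq> 0 \<Longrightarrow> copair a a = 2"
  by (simp add: copair_def)
lemma refl_self: "a \<noteq> 0 \<Longrightarrow> refl a a = - a"
  by (simp add: refl_def copair_self scaleR_2)
lemma linear_refl: "linear (refl a)"
  by (rule linearI) (auto simp: refl_def copair_add copair_scale algebra_simps)
lemma refl_refl: "a \<noteq> 0 \<Longrightarrow> refl a (refl a v) = v"
  by (simp add: refl_def copair_diff copair_scale copair_self)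
lemma refl_inner: "a \<noteq> 0 \<Longrightarrow> refl a x \<bullet> refl a y = x \<bullet> y"
  by (simp add: refl_def copair_def inner_diff_left inner_diff_right algebra_simps inner_commute)

lemma wordprod_Nil[simp]: "wordprod [] = id"
  by (simp add: wordprod_def)
lemma wordprod_Cons[simp]: "wordprod (a # ws) = refl a \<circ> wordprod ws"
  by (simp add: wordprod_def)
lemma wordprod_append: "wordprod (xs @ ys) = wordprod xs \<circ> wordprod ys"
  by (induct xs) auto
lemma wordprod_snoc: "wordprod (xs @ [a]) = wordprod xs \<circ> refl a"
  by (simp add: wordprod_append)

definition isom :: "('a::real_inner \<Rightarrow> 'a) \<Rightarrow> bool" where
  "isom f \<longleftrightarrow> linear f \<and> (\<forall>x y. f x \<bullet> f y = x \<bullet> y)"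

lemma isom_id: "isom id" by (simp add: isom_def linear_id)
lemma isom_comp: "isom f \<Longrightarrow> isom g \<Longrightarrow> isom (f \<circ> g)"
  by (simp add: isom_def linear_compose)
lemma isom_refl: "a \<noteq> 0 \<Longrightarrow> isom (refl a)"
  by (simp add: isom_def linear_refl refl_inner)
lemma isom_copair: "isom f \<Longrightarrow> copair (f a) (f v) = copair a v"
  by (simp add: isom_def copair_def)
lemma isom_inj: "isom f \<Longrightarrow> f x = f y \<Longrightarrow> x = y"
proof -
  assume f: "isom f" and e: "f x = f y"
  then have "f (x - y) = 0" by (simp add: isom_def linear_diff)
  then have "(x - y) \<bullet> (x - y) = 0" using f unfolding isom_def by (metis inner_zero_left)
  then show "x = y" by simp
qed
lemma isom_neg: "isom f \<Longrightarrow> isom (\<lambda>x. - f x)"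
  by (auto simp: isom_def linear_compose_neg)
lemma isom_refl_comm: "isom f \<Longrightarrow> f (refl a v) = refl (f a) (f v)"
  by (simp add: refl_def isom_copair) (simp add: isom_def linear_diff linear_scale)
lemma isom_linear: "isom f \<Longrightarrow> linear f" by (simp add: isom_def)

lemma isom_wordprod: "0 \<notin> set ws \<Longrightarrow> isom (wordprod ws)"
  by (induct ws) (auto simp: isom_id isom_comp isom_refl)

lemma wordprod_rev_inv: "0 \<notin> set ws \<Longrightarrow> wordprod (rev ws) (wordprod ws v) = v"
  by (induct ws arbitrary: v) (auto simp: wordprod_append refl_refl)
lemma wordprod_inv_rev: "0 \<notin> set ws \<Longrightarrow> wordprod ws (wordprod (rev ws) v) = v"
  using wordprod_rev_inv[of "rev ws"] by simp

lemma wordprod_map: "isom f \<Longrightarrow> wordprod (map f ws) (f v) = f (wordprod ws v)"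
  by (induct ws arbitrary: v) (auto simp: isom_refl_comm)


locale rb =
  fixes R S :: "'a::euclidean_space set"
  assumes rs: "root_system R" and base: "is_base R S"
begin

lemma finR: "finite R" using rs by (simp add: root_system_def)
lemma zeroR: "0 \<notin> R" using rs by (simp add: root_system_def)
lemma reflR: "a \<in> R \<Longrightarrow> x \<in> R \<Longrightarrow> refl a x \<in> R" using rs by (auto simp: root_system_def)
lemma intR: "a \<in> R \<Longrightarrow> x \<in> R \<Longrightarrow> copair a x \<in> \<int>" using rs by (auto simp: root_system_def)
lemma redR: "a \<in> R \<Longrightarrow> c *\<^sub>R a \<in> R \<Longrightarrow> c = 1 \<or> c = -1" using rs by (auto simp: root_system_def)
lemma spanR: "span R = UNIV" using rs by (simp add: root_system_def)
lemma SR: "S \<subseteq> R" using base by (simp add: is_base_def)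
lemma finS: "finite S" using SR finR finite_subset by blast
lemma zeroS: "0 \<notin> S" using SR zeroR by blast
lemma indS: "independent S" using base by (simp add: is_base_def)
lemma dich: "a \<in> R \<Longrightarrow> a \<in> pos_roots R S \<or> - a \<in> pos_roots R S"
  using base by (simp add: is_base_def)
lemma posR: "a \<in> pos_roots R S \<Longrightarrow> a \<in> R" by (simp add: pos_roots_def)

definition coef :: "'a \<Rightarrow> 'a \<Rightarrow> real" where
  "coef u = (SOME g. linear g \<and> (\<forall>x\<in>S. g x = (if x = u then 1 else 0)))"

lemma coef_ex: "linear (coef u) \<and> (\<forall>x\<in>S. coef u x = (if x = u then 1 else 0))"
proof -
  let ?P = "\<lambda>g. linear g \<and> (\<forall>x\<in>S. g x = (if x = u then (1::real) else 0))"
  obtain g where g: "?P g"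
    using linear_independent_extend[OF indS, of "\<lambda>x. if x = u then (1::real) else 0"] by auto
  have "?P (SOME g. ?P g)" using someI[of ?P g] g by blast
  then show ?thesis unfolding coef_def by simp
qed
lemma coef_linear: "linear (coef u)" using coef_ex[of u] by simp
lemma coef_S: "x \<in> S \<Longrightarrow> coef u x = (if x = u then 1 else 0)" using coef_ex[of u] by simp

lemma coef_sum: "u \<in> S \<Longrightarrow> coef u (\<Sum>s\<in>S. a s *\<^sub>R s) = a u"
proof -
  assume u: "u \<in> S"
  have "coef u (\<Sum>s\<in>S. a s *\<^sub>R s) = (\<Sum>s\<in>S. a s * coef u s)"
    by (simp add: linear_sum[OF coef_linear] linear_scale[OF coef_linear])
  also have "\<dots> = (\<Sum>s\<in>S. if s = u then a s else 0)"
    by (rule sum.cong) (auto simp: coef_S)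
  also have "\<dots> = a u" using u finS by (simp add: sum.delta)
  finally show ?thesis .
qed

lemma span_S: "span S = UNIV"
proof -
  have "R \<subseteq> span S"
  proof
    fix a assume a: "a \<in> R"
    have "x \<in> pos_roots R S \<Longrightarrow> x \<in> span S" for x
      unfolding pos_roots_def
      by (auto intro!: span_sum span_scale simp: span_base)
    then show "a \<in> span S" using dich[OF a] by (metis minus_minus span_neg)
  qed
  then have "span R \<subseteq> span S" by (simp add: span_minimal)
  then show ?thesis using spanR by auto
qed

lemma expand: "x = (\<Sum>u\<in>S. coef u x *\<^sub>R u)"
proof -
  have "x \<in> span S" using span_S by simp
  then obtain a where x: "x = (\<Sum>v\<in>S. a v *\<^sub>R v)"
    using span_finite[OF finS] by auto
  have "(\<Sum>u\<in>S. coef u x *\<^sub>R u) = (\<Sum>u\<in>S. a u *\<^sub>R u)"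
    by (rule sum.cong) (auto simp: x coef_sum)
  then show ?thesis using x by simp
qed

lemma coef_pos: "x \<in> pos_roots R S \<Longrightarrow> u \<in> S \<Longrightarrow> coef u x \<ge> 0"
  unfolding pos_roots_def by (auto simp: coef_sum)

definition nn :: "'a \<Rightarrow> bool" where "nn x \<longleftrightarrow> (\<forall>u\<in>S. coef u x \<ge> 0)"

lemma nn_pos: "x \<in> pos_roots R S \<Longrightarrow> nn x" by (simp add: nn_def coef_pos)
lemma nn_add: "nn x \<Longrightarrow> nn y \<Longrightarrow> nn (x + y)"
  by (simp add: nn_def linear_add[OF coef_linear])
lemma nn_scale: "nn x \<Longrightarrow> c \<ge> 0 \<Longrightarrow> nn (c *\<^sub>R x)"
  by (simp add: nn_def linear_scale[OF coef_linear])
lemma nn_zero: "nn 0" by (simp add: nn_def linear_0[OF coef_linear])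
lemma nn_sum: "(\<And>i. i \<in> I \<Longrightarrow> nn (f i)) \<Longrightarrow> nn (sum f I)"
  by (induct I rule: infinite_finite_induct) (auto simp: nn_zero nn_add)
lemma nn_both: "nn x \<Longrightarrow> nn (- x) \<Longrightarrow> x = 0"
proof -
  assume a: "nn x" "nn (- x)"
  have "\<forall>u\<in>S. coef u x = 0"
  proof
    fix u assume u: "u \<in> S"
    have "coef u x \<ge> 0" "coef u (- x) \<ge> 0" using a u nn_def by auto
    then show "coef u x = 0" by (simp add: linear_neg[OF coef_linear])
  qed
  then have "(\<Sum>u\<in>S. coef u x *\<^sub>R u) = 0" by simp
  then show ?thesis using expand[of x] by simp
qed

lemma pos_not_neg: "x \<in> pos_roots R S \<Longrightarrow> - x \<notin> pos_roots R S"
proof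
  assume a: "x \<in> pos_roots R S" "- x \<in> pos_roots R S"
  then have "x = 0" by (intro nn_both nn_pos)
  then show False using a(1) posR zeroR by simp
qed

lemma S_pos: "s \<in> S \<Longrightarrow> s \<in> pos_roots R S"
proof -
  assume s: "s \<in> S"
  have "(\<Sum>t\<in>S. real (if t = s then 1 else 0) *\<^sub>R t) = (\<Sum>t\<in>S. if t = s then t else 0)"
    by (rule sum.cong) auto
  also have "\<dots> = s" using s finS by (simp add: sum.delta)
  finally have eq: "s = (\<Sum>t\<in>S. real (if t = s then 1 else 0) *\<^sub>R t)" by simp
  have "\<exists>c::'a\<Rightarrow>nat. s = (\<Sum>t\<in>S. real (c t) *\<^sub>R t)"
    by (rule exI[where x="\<lambda>t. if t = s then 1 else 0"], rule eq)
  moreover have "s \<in> R" using s SR by blast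
  ultimately show ?thesis unfolding pos_roots_def by blast
qed

lemma F2:
  assumes a: "a \<in> S" and v: "v \<in> pos_roots R S" and ne: "v \<noteq> a"
  shows "refl a v \<in> pos_roots R S"
proof (rule ccontr)
  assume np: "refl a v \<notin> pos_roots R S"
  have "refl a v \<in> R" using reflR SR a posR v by blast
  then have neg: "- refl a v \<in> pos_roots R S" using dich np by blast
  have zero: "coef u v = 0" if u: "u \<in> S" "u \<noteq> a" for u
  proof -
    have "coef u (- refl a v) = - coef u v"
      using u a by (simp add: refl_def linear_neg[OF coef_linear] linear_diff[OF coef_linear]
          linear_scale[OF coef_linear] coef_S)
    then show ?thesis using coef_pos[OF neg u(1)] coef_pos[OF v u(1)] by simp
  qed
  define c where "c = coef a v"
  have "v = (\<Sum>u\<in>S. (if u = a then c else 0) *\<^sub>R u)"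
    unfolding c_def by (subst expand) (rule sum.cong, auto simp: zero)
  also have "\<dots> = (\<Sum>u\<in>S. if u = a then c *\<^sub>R u else 0)" by (rule sum.cong) auto
  also have "\<dots> = c *\<^sub>R a" using a finS by (simp add: sum.delta)
  finally have va: "v = c *\<^sub>R a" .
  have "c *\<^sub>R a \<in> R" using va posR v by simp
  then have "c = 1 \<or> c = -1" using redR[of a c] SR a by auto
  moreover have "c \<ge> 0" using coef_pos[OF v a] c_def by simp
  ultimately have "v = a" using va by auto
  then show False using ne by simp
qed

lemma wordprod_R: "set ws \<subseteq> S \<Longrightarrow> x \<in> R \<Longrightarrow> wordprod ws x \<in> R"
proof (induct ws arbitrary: x)
  case Nil then show ?case by simp
next
  case (Cons a ws)
  have "a \<in> R" using Cons.prems SR by auto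
  moreover have "wordprod ws x \<in> R" using Cons by simp
  ultimately show ?case using reflR by simp
qed

lemma zero_set: "set ws \<subseteq> S \<Longrightarrow> 0 \<notin> set ws" using zeroS by blast

lemma deletion:
  assumes "set ws \<subseteq> S" "\<gamma> \<in> S" "- wordprod ws \<gamma> \<in> pos_roots R S"
  shows "\<exists>ws'. set ws' \<subseteq> set ws \<and> length ws' + 1 = length ws \<and> wordprod ws' = wordprod ws \<circ> refl \<gamma>"
  using assms
proof (induct ws)
  case Nil
  then have "- \<gamma> \<in> pos_roots R S" by simp
  then show ?case using S_pos[OF Nil(2)] pos_not_neg by blast
next
  case (Cons a ws)
  have a: "a \<in> S" and ws: "set ws \<subseteq> S" using Cons.prems by auto
  let ?v = "wordprod ws \<gamma>"
  have vR: "?v \<in> R" using wordprod_R[OF ws] SR Cons.prems(2) by blast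
  show ?case
  proof (cases "- ?v \<in> pos_roots R S")
    case True
    then obtain ws' where "set ws' \<subseteq> set ws" "length ws' + 1 = length ws" "wordprod ws' = wordprod ws \<circ> refl \<gamma>"
      using Cons.hyps ws Cons.prems(2) by blast
    then show ?thesis by (intro exI[of _ "a # ws'"]) (simp add: fun_eq_iff subset_insertI2)
  next
    case False
    then have vp: "?v \<in> pos_roots R S" using dich vR by blast
    have "- refl a ?v \<in> pos_roots R S" using Cons.prems(3) by simp
    then have "refl a ?v \<notin> pos_roots R S" using pos_not_neg by blast
    then have va: "?v = a" using F2[OF a vp] by blast
    have iso: "isom (wordprod ws)" using isom_wordprod zero_set[OF ws] by blast
    have "wordprod ws \<circ> refl \<gamma> = refl a \<circ> wordprod ws"
      using isom_refl_comm[OF iso] va by (auto simp: fun_eq_iff)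
    then have "wordprod (a # ws) \<circ> refl \<gamma> = wordprod ws"
    proof -
      have a0: "a \<noteq> 0" using zeroS a by blast
      show ?thesis using \<open>wordprod ws \<circ> refl \<gamma> = refl a \<circ> wordprod ws\<close>
        by (simp add: fun_eq_iff refl_refl[OF a0])
    qed
    then show ?thesis by (intro exI[of _ ws]) (simp add: comp_def subset_insertI)
  qed
qed


lemma wlen_le: "set ws \<subseteq> S \<Longrightarrow> wlen S (wordprod ws) \<le> length ws"
  unfolding wlen_def by (rule Least_le) blast

lemma wlen_word: "w \<in> weyl S \<Longrightarrow> \<exists>ws. set ws \<subseteq> S \<and> length ws = wlen S w \<and> wordprod ws = w"
proof -
  assume "w \<in> weyl S"
  then obtain gs where gs: "set gs \<subseteq> S" "wordprod gs = w" by (auto simp: weyl_def)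
  then have "\<exists>n. \<exists>gs. set gs \<subseteq> S \<and> length gs = n \<and> wordprod gs = w" by blast
  then show ?thesis unfolding wlen_def by (rule LeastI_ex)
qed

lemma weyl_word: "set ws \<subseteq> S \<Longrightarrow> wordprod ws \<in> weyl S"
  by (auto simp: weyl_def)

lemma weyl_isom: "w \<in> weyl S \<Longrightarrow> isom w"
  using isom_wordprod zero_set by (auto simp: weyl_def)

lemma weyl_R: "w \<in> weyl S \<Longrightarrow> x \<in> R \<Longrightarrow> w x \<in> R"
  using wordprod_R by (auto simp: weyl_def)

lemma negR: "x \<in> R \<Longrightarrow> - x \<in> R"
proof -
  assume x: "x \<in> R"
  then have "x \<noteq> 0" using zeroR by blast
  then have "refl x x = - x" by (rule refl_self)
  then show "- x \<in> R" using reflR[OF x x] by simp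
qed

lemma nn_R_pos: "x \<in> R \<Longrightarrow> nn x \<Longrightarrow> x \<in> pos_roots R S"
proof (rule ccontr)
  assume a: "x \<in> R" "nn x" "x \<notin> pos_roots R S"
  then have "- x \<in> pos_roots R S" using dich by blast
  then have "x = 0" using a nn_both nn_pos by blast
  then show False using a zeroR by simp
qed

lemma nn_linear:
  assumes f: "linear f" and x: "nn x" and h: "\<And>s. s \<in> S \<Longrightarrow> coef s x \<noteq> 0 \<Longrightarrow> nn (f s)"
  shows "nn (f x)"
proof -
  have "f x = f (\<Sum>s\<in>S. coef s x *\<^sub>R s)" by (subst expand[of x]) (rule refl)
  also have "\<dots> = (\<Sum>s\<in>S. coef s x *\<^sub>R f s)"
    by (simp add: linear_sum[OF f] linear_scale[OF f] comp_def)
  finally have e: "f x = (\<Sum>s\<in>S. coef s x *\<^sub>R f s)" .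
  have "nn (\<Sum>s\<in>S. coef s x *\<^sub>R f s)"
  proof (rule nn_sum)
    fix s assume s: "s \<in> S"
    show "nn (coef s x *\<^sub>R f s)"
    proof (cases "coef s x = 0")
      case True then show ?thesis by (simp add: nn_zero)
    next
      case False
      then show ?thesis using h[OF s False] x s by (intro nn_scale) (auto simp: nn_def)
    qed
  qed
  then show ?thesis using e by simp
qed

lemma max_neg:
  assumes w: "w \<in> weyl S" and mx: "\<forall>v\<in>weyl S. wlen S v \<le> wlen S w" and g: "\<gamma> \<in> S"
  shows "- w \<gamma> \<in> pos_roots R S"
proof (rule ccontr)
  assume "- w \<gamma> \<notin> pos_roots R S"
  moreover have "w \<gamma> \<in> R" using weyl_R w g SR by blast
  ultimately have p: "w \<gamma> \<in> pos_roots R S" using dich by blast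
  obtain ws where ws: "set ws \<subseteq> S" "length ws = wlen S w" "wordprod ws = w" using wlen_word[OF w] by blast
  have "w \<circ> refl \<gamma> = wordprod (ws @ [\<gamma>])" using ws by (simp add: wordprod_snoc)
  moreover have "set (ws @ [\<gamma>]) \<subseteq> S" using ws g by simp
  ultimately have wg: "w \<circ> refl \<gamma> \<in> weyl S" using weyl_word by metis
  obtain vs where vs: "set vs \<subseteq> S" "length vs = wlen S (w \<circ> refl \<gamma>)" "wordprod vs = w \<circ> refl \<gamma>"
    using wlen_word[OF wg] by blast
  have g0: "\<gamma> \<noteq> 0" using g zeroS by blast
  have "wordprod vs \<gamma> = w (- \<gamma>)" using vs(3) refl_self[OF g0] by simp
  also have "\<dots> = - w \<gamma>" using weyl_isom[OF w] by (simp add: isom_def linear_neg)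
  finally have "- wordprod vs \<gamma> \<in> pos_roots R S" using p by simp
  then obtain vs' where vs': "set vs' \<subseteq> set vs" "length vs' + 1 = length vs"
      "wordprod vs' = wordprod vs \<circ> refl \<gamma>"
    using deletion[OF vs(1) g] by blast
  have "wordprod vs' = w" using vs'(3) vs(3) by (simp add: fun_eq_iff refl_refl[OF g0])
  then have "wlen S w \<le> length vs'" using wlen_le[of vs'] vs'(1) vs(1) by auto
  moreover have "wlen S (w \<circ> refl \<gamma>) \<le> wlen S w" using mx wg by blast
  ultimately show False using vs'(2) vs(2) by simp
qed

lemma max_pos_neg:
  assumes w: "w \<in> weyl S" and h: "\<forall>\<gamma>\<in>S. - w \<gamma> \<in> pos_roots R S" and x: "x \<in> pos_roots R S"
  shows "- w x \<in> pos_roots R S"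
proof -
  have l: "linear (\<lambda>x. - w x)" using weyl_isom[OF w] isom_neg isom_linear by blast
  have "nn (- w x)" using nn_linear[OF l nn_pos[OF x]] h nn_pos by blast
  moreover have "- w x \<in> R" using weyl_R[OF w posR[OF x]] by (rule negR)
  ultimately show ?thesis using nn_R_pos by blast
qed


lemma weyl_finite: "finite (weyl S)"
proof -
  have inj: "inj_on (\<lambda>w. restrict w R) (weyl S)"
  proof (rule inj_onI)
    fix v w assume v: "v \<in> weyl S" and w: "w \<in> weyl S" and e: "restrict v R = restrict w R"
    have lv: "linear v" and lw: "linear w" using weyl_isom[OF v] weyl_isom[OF w] isom_linear by auto
    have ey: "v y = w y" if "y \<in> R" for y using fun_cong[OF e, of y] that by simp
    have "v x = w x" for x
      using linear_eq_on_span[OF lv lw, of R x] ey spanR by blast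
    then show "v = w" by (rule ext)
  qed
  have "(\<lambda>w. restrict w R) ` weyl S \<subseteq> Pi\<^sub>E R (\<lambda>_. R)"
    using weyl_R by auto
  moreover have "finite (Pi\<^sub>E R (\<lambda>_. R))" using finR by (intro finite_PiE) auto
  ultimately have "finite ((\<lambda>w. restrict w R) ` weyl S)" by (rule finite_subset)
  then show ?thesis using inj by (rule finite_imageD)
qed

lemma max_exists: "\<exists>w\<in>weyl S. \<forall>v\<in>weyl S. wlen S v \<le> wlen S w"
proof -
  have ne: "wlen S ` weyl S \<noteq> {}" using weyl_word[of "[]"] by auto
  have fin: "finite (wlen S ` weyl S)" using weyl_finite by simp
  obtain w where w: "w \<in> weyl S" "wlen S w = Max (wlen S ` weyl S)"
    using Max_in[OF fin ne] by auto
  then show ?thesis using Max_ge[OF fin] by (intro bexI[of _ w]) auto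
qed

lemma neg_uniq:
  assumes w: "w \<in> weyl S" and w': "w' \<in> weyl S"
    and h: "\<forall>\<gamma>\<in>S. - w \<gamma> \<in> pos_roots R S" and h': "\<forall>\<gamma>\<in>S. - w' \<gamma> \<in> pos_roots R S"
  shows "w = w'"
proof -
  obtain ws where ws: "set ws \<subseteq> S" "wordprod ws = w" using w by (auto simp: weyl_def)
  obtain ws' where ws': "set ws' \<subseteq> S" "wordprod ws' = w'" using w' by (auto simp: weyl_def)
  define v where "v = wordprod (rev ws) \<circ> w'"
  have v_eq: "v = wordprod (rev ws @ ws')" using ws' by (simp add: v_def wordprod_append)
  have vW: "v \<in> weyl S" using v_eq ws ws' weyl_word[of "rev ws @ ws'"] by simp
  have wv: "w (v x) = w' x" for x using wordprod_inv_rev[OF zero_set[OF ws(1)]] ws by (simp add: v_def)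
  have vpos: "v \<gamma> \<in> pos_roots R S" if g: "\<gamma> \<in> S" for \<gamma>
  proof (rule ccontr)
    assume "v \<gamma> \<notin> pos_roots R S"
    moreover have "v \<gamma> \<in> R" using weyl_R[OF vW] g SR by blast
    ultimately have n: "- v \<gamma> \<in> pos_roots R S" using dich by blast
    have "- w (- v \<gamma>) \<in> pos_roots R S" using max_pos_neg[OF w h n] .
    moreover have "- w (- v \<gamma>) = w' \<gamma>" using wv weyl_isom[OF w] by (simp add: isom_def linear_neg)
    ultimately show False using h' g pos_not_neg by auto
  qed
  obtain us where us: "set us \<subseteq> S" "length us = wlen S v" "wordprod us = v" using wlen_word[OF vW] by blast
  have "us = []"
  proof (rule ccontr)
    assume "us \<noteq> []"
    then obtain us' \<gamma> where u: "us = us' @ [\<gamma>]" by (metis rev_exhaust)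
    have g: "\<gamma> \<in> S" and us'S: "set us' \<subseteq> S" using us u by auto
    have g0: "\<gamma> \<noteq> 0" using g zeroS by blast
    have veq: "v = wordprod us' \<circ> refl \<gamma>" using us(3) u by (simp add: wordprod_snoc)
    have "v \<gamma> = wordprod us' (refl \<gamma> \<gamma>)" by (simp add: veq)
    also have "\<dots> = wordprod us' (- \<gamma>)" by (simp add: refl_self[OF g0])
    also have "\<dots> = - wordprod us' \<gamma>" using isom_wordprod[OF zero_set[OF us'S]] by (simp add: isom_def linear_neg)
    finally have "- wordprod us' \<gamma> \<in> pos_roots R S" using vpos[OF g] by simp
    then obtain us'' where u'': "set us'' \<subseteq> set us'" "length us'' + 1 = length us'"
        "wordprod us'' = wordprod us' \<circ> refl \<gamma>"
      using deletion[OF us'S g] by blast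
    have "wordprod us'' = v" using u'' us u by (simp add: wordprod_snoc)
    then have "wlen S v \<le> length us''" using wlen_le[of us''] u'' us'S by auto
    then show False using u'' us u by simp
  qed
  then have "v = id" using us by simp
  then show ?thesis using wv by (auto simp: fun_eq_iff)
qed

lemma longest_props:
  "longest S \<in> weyl S \<and> (\<forall>\<gamma>\<in>S. - longest S \<gamma> \<in> pos_roots R S)"
proof -
  obtain w where w: "w \<in> weyl S" "\<forall>v\<in>weyl S. wlen S v \<le> wlen S w" using max_exists by blast
  have "longest S = w"
    unfolding longest_def
  proof (rule the_equality)
    show "w \<in> weyl S \<and> (\<forall>v\<in>weyl S. wlen S v \<le> wlen S w)" using w by blast
    fix w' assume "w' \<in> weyl S \<and> (\<forall>v\<in>weyl S. wlen S v \<le> wlen S w')"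
    then show "w' = w" using neg_uniq[of w' w] max_neg w by blast
  qed
  then show ?thesis using w max_neg by auto
qed

definition th :: "'a \<Rightarrow> 'a" where "th x = - longest S x"

lemma th_eq: "th = weyl_inv S" by (simp add: th_def weyl_inv_def fun_eq_iff)

lemma th_isom: "isom th"
  unfolding th_def using longest_props weyl_isom isom_neg by blast

lemma th_pos: "x \<in> pos_roots R S \<Longrightarrow> th x \<in> pos_roots R S"
  unfolding th_def using longest_props max_pos_neg by blast

lemma th_S: "\<beta> \<in> S \<Longrightarrow> \<exists>t\<in>S. th t = \<beta>"
proof -
  assume b: "\<beta> \<in> S"
  have "pos_roots R S \<subseteq> R" by (auto simp: pos_roots_def)
  then have finP: "finite (pos_roots R S)" using finR by (rule finite_subset)
  have "th ` pos_roots R S = pos_roots R S"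
  proof (rule endo_inj_surj[OF finP])
    show "th ` pos_roots R S \<subseteq> pos_roots R S" using th_pos by blast
    show "inj_on th (pos_roots R S)" using isom_inj[OF th_isom] by (simp add: inj_on_def)
  qed
  then have "\<beta> \<in> th ` pos_roots R S" using S_pos[OF b] by simp
  then obtain \<delta> where d: "\<delta> \<in> pos_roots R S" "th \<delta> = \<beta>" by auto
  have lth: "linear th" using th_isom isom_linear by blast
  have bsum: "\<beta> = (\<Sum>s\<in>S. coef s \<delta> *\<^sub>R th s)"
  proof -
    have "th \<delta> = th (\<Sum>s\<in>S. coef s \<delta> *\<^sub>R s)" by (rule arg_cong[OF expand])
    then have "\<beta> = th (\<Sum>s\<in>S. coef s \<delta> *\<^sub>R s)" using d(2) by simp
    then show ?thesis by (simp add: linear_sum[OF lth] linear_scale[OF lth] comp_def)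
  qed
  obtain t where t: "t \<in> S" "coef t \<delta> \<noteq> 0"
  proof (rule ccontr)
    assume "\<not> thesis"
    with that have "\<forall>t\<in>S. coef t \<delta> = 0" by blast
    then have "(\<Sum>u\<in>S. coef u \<delta> *\<^sub>R u) = 0" by simp
    then have "\<delta> = 0" using expand[of \<delta>] by (simp only:)
    then show False using d(1) posR zeroR by blast
  qed
  have ct: "coef t \<delta> > 0" using coef_pos[OF d(1) t(1)] t(2) by simp
  have thtS: "th t \<in> pos_roots R S" using th_pos S_pos t(1) by blast
  have zero: "coef u (th t) = 0" if u: "u \<in> S" "u \<noteq> \<beta>" for u
  proof -
    have "coef u \<beta> = (\<Sum>s\<in>S. coef s \<delta> * coef u (th s))"
      by (subst bsum) (simp add: linear_sum[OF coef_linear] linear_scale[OF coef_linear] comp_def)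
    moreover have "coef u \<beta> = 0" using coef_S[OF b] u by simp
    moreover have "\<forall>s\<in>S. 0 \<le> coef s \<delta> * coef u (th s)"
      using coef_pos[OF d(1)] coef_pos[OF th_pos[OF S_pos]] u by simp
    ultimately have "\<forall>s\<in>S. coef s \<delta> * coef u (th s) = 0"
      using sum_nonneg_eq_0_iff[OF finS, of "\<lambda>s. coef s \<delta> * coef u (th s)"] by simp
    then have "coef t \<delta> * coef u (th t) = 0" using t by blast
    then show ?thesis using ct by simp
  qed
  define c where "c = coef \<beta> (th t)"
  have "th t = (\<Sum>u\<in>S. coef u (th t) *\<^sub>R u)" by (rule expand)
  also have "\<dots> = (\<Sum>u\<in>S. (if u = \<beta> then c else 0) *\<^sub>R u)"
    unfolding c_def by (rule sum.cong) (auto simp: zero)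
  also have "\<dots> = (\<Sum>u\<in>S. if u = \<beta> then c *\<^sub>R u else 0)" by (rule sum.cong) auto
  also have "\<dots> = c *\<^sub>R \<beta>" using b finS by (simp add: sum.delta)
  finally have va: "th t = c *\<^sub>R \<beta>" .
  have "c *\<^sub>R \<beta> \<in> R" using va posR thtS by simp
  then have "c = 1 \<or> c = -1" using redR[of \<beta> c] SR b by auto
  moreover have "c \<ge> 0" using coef_pos[OF thtS b] c_def by simp
  ultimately have "th t = \<beta>" using va by auto
  then show ?thesis using t by blast
qed


lemma tele: "(i::nat) \<le> (n::nat) \<Longrightarrow> (\<Sum>k\<in>{i+1..n}. h (k-1) - h k) = h i - (h n :: real)"
  by (induct n) (auto simp: atLeastAtMostSuc_conv le_Suc_eq)

lemma copair_refl_same: "g \<noteq> 0 \<Longrightarrow> copair g (refl g x) = - copair g x"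
  by (simp add: refl_def copair_diff copair_scale copair_self)

lemma int_orbit:
  assumes om: "\<forall>a\<in>S. copair a \<omega> \<in> \<int>" and ws: "set ws \<subseteq> S" and a: "a \<in> S"
  shows "copair a (wordprod ws \<omega>) \<in> \<int>"
  using ws a
proof (induct ws arbitrary: a)
  case Nil then show ?case using om by simp
next
  case (Cons h ws)
  have h: "h \<in> S" and ws: "set ws \<subseteq> S" using Cons.prems by auto
  have "copair a (wordprod (h # ws) \<omega>) = copair a (wordprod ws \<omega>) - copair h (wordprod ws \<omega>) * copair a h"
    by (simp add: refl_def copair_diff copair_scale)
  moreover have "copair a (wordprod ws \<omega>) \<in> \<int>" using Cons.hyps ws Cons.prems(2) by blast
  moreover have "copair h (wordprod ws \<omega>) \<in> \<int>" using Cons.hyps ws h by blast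
  moreover have "copair a h \<in> \<int>" using intR SR h Cons.prems(2) by blast
  ultimately show ?case by simp
qed

lemma inner_nonneg_pos:
  assumes om: "\<forall>s\<in>S. copair s \<omega> \<ge> 0" and d: "\<delta> \<in> pos_roots R S"
  shows "\<omega> \<bullet> \<delta> = (\<Sum>s\<in>S. coef s \<delta> * (\<omega> \<bullet> s))" and "\<forall>s\<in>S. coef s \<delta> * (\<omega> \<bullet> s) \<ge> 0"
proof -
  have "\<omega> \<bullet> \<delta> = \<omega> \<bullet> (\<Sum>s\<in>S. coef s \<delta> *\<^sub>R s)" by (rule arg_cong[OF expand])
  then show "\<omega> \<bullet> \<delta> = (\<Sum>s\<in>S. coef s \<delta> * (\<omega> \<bullet> s))" by (simp add: inner_sum_right)
  show "\<forall>s\<in>S. coef s \<delta> * (\<omega> \<bullet> s) \<ge> 0"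
  proof
    fix s assume s: "s \<in> S"
    have s0: "s \<bullet> s > 0" using s zeroS by auto
    have "\<omega> \<bullet> s = copair s \<omega> * (s \<bullet> s) / 2" using s0 by (simp add: copair_def inner_commute)
    moreover have "copair s \<omega> * (s \<bullet> s) \<ge> 0" using om s s0 by simp
    ultimately have "\<omega> \<bullet> s \<ge> 0" using s0 by (simp add: divide_nonneg_pos)
    then show "coef s \<delta> * (\<omega> \<bullet> s) \<ge> 0" using coef_pos[OF d s] by simp
  qed
qed

lemma main_untwisted:
  fixes \<omega> :: 'a and m :: 'a and \<phi> :: "'a \<Rightarrow> 'a"
  assumes m: "m \<in> S" and fw: "\<forall>\<delta>\<in>S. copair \<delta> \<omega> = (if \<delta> = m then 1 else 0)"
    and mins: "\<forall>\<alpha>\<in>pos_roots R S. copair \<alpha> \<omega> \<le> 1"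
    and minc: "\<forall>u\<in>parabolic_weyl S \<omega>. wlen S \<phi> \<le> wlen S (\<phi> \<circ> u)"
    and gs: "set gs \<subseteq> S" "length gs = wlen S \<phi>" "wordprod gs = \<phi>"
    and i: "1 \<le> i" "i \<le> length gs"
  shows "(\<Sum>k\<in>{k\<in>{i+1..length gs}. gs ! (k - 1) = m}. copair (alpha_seq gs i) (alpha_seq gs k))
     = (if gs ! (i - 1) \<noteq> m then 1 else 0)"
proof -
  define n where "n = length gs"
  define g where "g = gs ! (i - 1)"
  define pre where "pre = take (i - 1) gs"
  define rest where "rest = drop i gs"
  define P where "P = wordprod pre"
  define Q where "Q = wordprod rest"
  have il: "i - 1 < length gs" using i by simp
  have decomp: "gs = pre @ g # rest"
    using id_take_nth_drop[OF il] i by (simp add: pre_def g_def rest_def)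
  have gS: "g \<in> S" using gs(1) decomp by auto
  have preS: "set pre \<subseteq> S" and restS: "set rest \<subseteq> S" using gs(1) decomp by auto
  have g0: "g \<noteq> 0" using gS zeroS by blast
  have lpre: "length pre = i - 1" using il by (simp add: pre_def)
  have lrest: "length rest = n - i" by (simp add: rest_def n_def)
  have "\<phi> = wordprod gs" using gs(3) by simp
  also have "\<dots> = P \<circ> refl g \<circ> Q" by (subst decomp) (simp add: P_def Q_def wordprod_append comp_assoc)
  finally have phi: "\<phi> = P \<circ> refl g \<circ> Q" .
  have short: "n \<le> length ws" if "set ws \<subseteq> S" "wordprod ws = \<phi>" for ws
    using wlen_le[OF that(1)] that(2) gs(2) n_def by simp
  have isoP: "isom P" unfolding P_def using isom_wordprod zero_set[OF preS] by blast
  have isoQ: "isom Q" unfolding Q_def using isom_wordprod zero_set[OF restS] by blast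
  have isophi: "isom \<phi>" using gs(3) isom_wordprod zero_set[OF gs(1)] by blast
  have Pg: "P g \<in> pos_roots R S"
  proof (rule ccontr)
    assume "P g \<notin> pos_roots R S"
    moreover have "P g \<in> R" unfolding P_def using wordprod_R[OF preS] gS SR by blast
    ultimately have "- wordprod pre g \<in> pos_roots R S" using dich P_def by blast
    then obtain ws' where ws': "set ws' \<subseteq> set pre" "length ws' + 1 = length pre"
        "wordprod ws' = wordprod pre \<circ> refl g" using deletion[OF preS gS] by blast
    have "wordprod (ws' @ rest) = \<phi>" using ws'(3) phi by (simp add: wordprod_append P_def Q_def comp_assoc)
    moreover have "set (ws' @ rest) \<subseteq> S" using ws'(1) preS restS by auto
    ultimately have "n \<le> length (ws' @ rest)" using short by blast
    then show False using ws'(2) lpre lrest i n_def by simp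
  qed
  define \<delta> where "\<delta> = wordprod (rev rest) g"
  have Qd: "Q \<delta> = g" unfolding Q_def \<delta>_def by (rule wordprod_inv_rev[OF zero_set[OF restS]])
  have dpos: "\<delta> \<in> pos_roots R S"
  proof (rule ccontr)
    assume "\<delta> \<notin> pos_roots R S"
    moreover have "\<delta> \<in> R" unfolding \<delta>_def using wordprod_R[of "rev rest"] restS gS SR by auto
    ultimately have "- wordprod (rev rest) g \<in> pos_roots R S" using dich \<delta>_def by blast
    moreover have rrS: "set (rev rest) \<subseteq> S" using restS by simp
    ultimately obtain ws' where ws': "set ws' \<subseteq> set (rev rest)" "length ws' + 1 = length (rev rest)"
        "wordprod ws' = wordprod (rev rest) \<circ> refl g" using deletion[OF rrS gS] by blast
    have ws'S: "set ws' \<subseteq> S" using ws'(1) restS by auto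
    have "refl g \<circ> Q = wordprod (rev ws')"
    proof
      fix x
      have "wordprod (rev ws') (wordprod ws' (refl g (Q x))) = refl g (Q x)"
        by (rule wordprod_rev_inv[OF zero_set[OF ws'S]])
      moreover have "wordprod ws' (refl g (Q x)) = x"
        using ws'(3) wordprod_rev_inv[OF zero_set[OF restS]] by (simp add: Q_def refl_refl[OF g0])
      ultimately show "(refl g \<circ> Q) x = wordprod (rev ws') x" by simp
    qed
    then have "wordprod (pre @ rev ws') = \<phi>" using phi by (simp add: wordprod_append P_def Q_def comp_assoc)
    moreover have "set (pre @ rev ws') \<subseteq> S" using ws'S preS by auto
    ultimately have "n \<le> length (pre @ rev ws')" using short by blast
    then show False using ws'(2) lpre lrest i n_def by simp
  qed
  have levi: "\<phi> s \<in> pos_roots R S" if s: "s \<in> S" "copair s \<omega> = 0" for s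
  proof (rule ccontr)
    assume "\<phi> s \<notin> pos_roots R S"
    moreover have "\<phi> s \<in> R" using gs(3) wordprod_R[OF gs(1)] s SR by blast
    ultimately have "- wordprod gs s \<in> pos_roots R S" using dich gs(3) by blast
    then obtain ws' where ws': "set ws' \<subseteq> set gs" "length ws' + 1 = length gs"
        "wordprod ws' = wordprod gs \<circ> refl s" using deletion[OF gs(1) s(1)] by blast
    have "wordprod [s] \<in> parabolic_weyl S \<omega>" unfolding parabolic_weyl_def weyl_def mem_Collect_eq using s by (intro exI[of _ "[s]"]) auto
    then have "wlen S \<phi> \<le> wlen S (\<phi> \<circ> wordprod [s])" using minc by blast
    also have "\<phi> \<circ> wordprod [s] = wordprod ws'" using ws'(3) gs(3) by simp
    also have "wlen S (wordprod ws') \<le> length ws'" using ws'(1) gs(1) by (intro wlen_le) auto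
    finally show False using ws'(2) gs(2) by simp
  qed
  have c_eq: "copair g (Q \<omega>) = copair \<delta> \<omega>" using isom_copair[OF isoQ, of \<delta> \<omega>] Qd by simp
  have om_nonneg: "\<forall>s\<in>S. copair s \<omega> \<ge> 0" using fw by simp
  have c_int: "copair g (Q \<omega>) \<in> \<int>" unfolding Q_def
    by (rule int_orbit[OF _ restS gS]) (use fw in simp)
  have c_le: "copair \<delta> \<omega> \<le> 1" using mins dpos by blast
  have d0: "\<delta> \<bullet> \<delta> > 0" using dpos posR zeroR by (metis inner_gt_zero_iff)
  have ip: "\<omega> \<bullet> \<delta> = (\<Sum>s\<in>S. coef s \<delta> * (\<omega> \<bullet> s))" and ipn: "\<forall>s\<in>S. coef s \<delta> * (\<omega> \<bullet> s) \<ge> 0"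
    using inner_nonneg_pos[OF om_nonneg dpos] by auto
  have c_ge: "copair \<delta> \<omega> \<ge> 0"
    using ip ipn d0 by (simp add: copair_def sum_nonneg)
  have c_ne: "copair \<delta> \<omega> \<noteq> 0"
  proof
    assume "copair \<delta> \<omega> = 0"
    then have "\<omega> \<bullet> \<delta> = 0" using d0 by (simp add: copair_def)
    then have z: "\<forall>s\<in>S. coef s \<delta> * (\<omega> \<bullet> s) = 0"
      using ip ipn sum_nonneg_eq_0_iff[OF finS, of "\<lambda>s. coef s \<delta> * (\<omega> \<bullet> s)"] by simp
    have lphi: "linear \<phi>" using isophi isom_linear by blast
    have "nn (\<phi> \<delta>)"
    proof (rule nn_linear[OF lphi nn_pos[OF dpos]])
      fix s assume s: "s \<in> S" "coef s \<delta> \<noteq> 0"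
      have "coef s \<delta> * (\<omega> \<bullet> s) = 0" using z s(1) by blast
      then have "\<omega> \<bullet> s = 0" using s(2) by simp
      then have "copair s \<omega> = 0" by (simp add: copair_def inner_commute)
      then show "nn (\<phi> s)" using levi s nn_pos by blast
    qed
    moreover have "\<phi> \<delta> = - P g"
      using phi Qd refl_self[OF g0] isoP by (simp add: isom_def linear_neg)
    ultimately have "nn (- P g)" by simp
    then have "P g = 0" using nn_both nn_pos[OF Pg] by blast
    then show False using Pg posR zeroR by simp
  qed
  have c1: "copair g (Q \<omega>) = 1"
  proof -
    obtain z :: int where z: "copair g (Q \<omega>) = of_int z" using c_int by (auto elim: Ints_cases)
    have "0 < z" "z \<le> 1" using c_eq c_ge c_ne c_le z by auto
    then have "z = 1" by simp
    then show ?thesis using z by simp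
  qed
  define W where "W j = wordprod (take j gs)" for j
  define A where "A k = alpha_seq gs k" for k
  have A_eq: "A k = W (k - 1) (gs ! (k - 1))" for k by (simp add: A_def W_def alpha_seq_def)
  have step: "W (k - 1) \<omega> - W k \<omega> = copair (gs ! (k - 1)) \<omega> *\<^sub>R A k" if k: "1 \<le> k" "k \<le> n" for k
  proof -
    have kl: "k - 1 < length gs" using k n_def by simp
    have "take k gs = take (k - 1) gs @ [gs ! (k - 1)]"
      using take_Suc_conv_app_nth[OF kl] k by simp
    then have Wk: "W k = W (k - 1) \<circ> refl (gs ! (k - 1))" by (simp add: W_def wordprod_snoc)
    have "set (take (k - 1) gs) \<subseteq> S" using gs(1) by (meson order_trans set_take_subset)
    then have lW: "linear (W (k - 1))" unfolding W_def using isom_wordprod zero_set isom_linear by blast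
    have "W (k - 1) \<omega> - W k \<omega> = W (k - 1) (\<omega> - refl (gs ! (k - 1)) \<omega>)"
      using Wk linear_diff[OF lW, of \<omega> "refl (gs ! (k - 1)) \<omega>"] by simp
    also have "\<dots> = W (k - 1) (copair (gs ! (k - 1)) \<omega> *\<^sub>R gs ! (k - 1))" by (simp add: refl_def)
    also have "\<dots> = copair (gs ! (k - 1)) \<omega> *\<^sub>R A k"
      using linear_scale[OF lW, of "copair (gs ! (k - 1)) \<omega>" "gs ! (k - 1)"] A_eq[of k] by simp
    finally show ?thesis .
  qed
  define h where "h j = copair (A i) (W j \<omega>)" for j
  have tm: "(if gs ! (k - 1) = m then copair (A i) (A k) else 0) = h (k - 1) - h k"
    if k: "k \<in> {i+1..n}" for k
  proof -
    have k1: "1 \<le> k" "k \<le> n" using k i by auto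
    have gkS: "gs ! (k - 1) \<in> S" using gs(1) k1 n_def by (auto intro!: subsetD[OF gs(1)] nth_mem)
    have "h (k - 1) - h k = copair (A i) (W (k - 1) \<omega> - W k \<omega>)" by (simp add: h_def copair_diff)
    also have "\<dots> = copair (gs ! (k - 1)) \<omega> * copair (A i) (A k)" using step[OF k1] by (simp add: copair_scale)
    finally show ?thesis using fw gkS by simp
  qed
  have "(\<Sum>k\<in>{k\<in>{i+1..n}. gs ! (k - 1) = m}. copair (A i) (A k))
      = (\<Sum>k\<in>{i+1..n}. if gs ! (k - 1) = m then copair (A i) (A k) else 0)"
    by (rule sum.inter_filter) simp
  also have "\<dots> = (\<Sum>k\<in>{i+1..n}. h (k - 1) - h k)" by (rule sum.cong[OF refl], erule tm)
  also have "\<dots> = h i - h n" using i n_def by (intro tele) auto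
  also have "h i = - copair g \<omega>"
  proof -
    have "take i gs = pre @ [g]" using take_Suc_conv_app_nth[OF il] i by (simp add: pre_def g_def)
    then have "W i = P \<circ> refl g" by (simp add: W_def P_def wordprod_snoc)
    moreover have "A i = P g" using A_eq[of i] by (simp add: W_def P_def g_def pre_def)
    ultimately show ?thesis using isom_copair[OF isoP] copair_refl_same[OF g0] by (simp add: h_def)
  qed
  also have "h n = - 1"
  proof -
    have "W n = \<phi>" using gs(3) by (simp add: W_def n_def)
    moreover have "A i = P g" using A_eq[of i] by (simp add: W_def P_def g_def pre_def)
    ultimately have "h n = copair (P g) (P (refl g (Q \<omega>)))" using phi by (simp add: h_def)
    also have "\<dots> = - copair g (Q \<omega>)" using isom_copair[OF isoP] copair_refl_same[OF g0] by simp
    finally show ?thesis using c1 by simp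
  qed
  finally show ?thesis using fw gS by (simp add: A_def n_def g_def)
qed

end


theorem mainTheorem5:
  fixes R S :: "'a::euclidean_space set"
    and \<omega> \<beta> :: 'a
    and \<phi> :: "'a \<Rightarrow> 'a"
    and gs :: "'a list"
  assumes "root_system R" and "is_base R S" and "simply_laced R"
    and "minuscule R S \<omega>"
    and "\<phi> \<in> weyl S"
    and "\<forall>u\<in>parabolic_weyl S \<omega>. wlen S \<phi> \<le> wlen S (\<phi> \<circ> u)"
    and "set gs \<subseteq> S" and "length gs = wlen S \<phi>" and "wordprod gs = \<phi>"
    and "\<beta> \<in> S" and "copair \<beta> (weyl_inv S \<omega>) = 1"
  shows "\<forall>i\<in>{1..length gs}.
     (\<Sum>k\<in>{k\<in>{i+1..length gs}. weyl_inv S (gs ! (k - 1)) = \<beta>}.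
        copair (alpha_seq (map (weyl_inv S) gs) i) (alpha_seq (map (weyl_inv S) gs) k))
     = (if weyl_inv S (gs ! (i - 1)) \<noteq> \<beta> then 1 else 0)"
proof -
  interpret rb R S using assms(1,2) by unfold_locales
  obtain m where m: "m \<in> S" "\<forall>\<delta>\<in>S. copair \<delta> \<omega> = (if \<delta> = m then 1 else 0)"
    using assms(4) unfolding minuscule_def fundamental_weight_def by blast
  have mins: "\<forall>\<alpha>\<in>pos_roots R S. copair \<alpha> \<omega> \<le> 1" using assms(4) unfolding minuscule_def by blast
  obtain t where t: "t \<in> S" "th t = \<beta>" using th_S[OF assms(10)] by blast
  have "copair t \<omega> = 1" using assms(11) t(2) isom_copair[OF th_isom, of t \<omega>] by (simp add: th_eq)
  then have tm: "t = m" using m(2) t(1) by (metis zero_neq_one)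
  have beq: "\<beta> = th m" using t tm by simp
  have thinj: "th x = th y \<longleftrightarrow> x = y" for x y using isom_inj[OF th_isom] by blast
  have aseq: "alpha_seq (map th gs) k = th (alpha_seq gs k)" if "1 \<le> k" "k \<le> length gs" for k
  proof -
    have "k - 1 < length gs" using that by simp
    then show ?thesis unfolding alpha_seq_def by (simp add: take_map wordprod_map[OF th_isom])
  qed
  show ?thesis unfolding th_eq[symmetric]
  proof
    fix i assume i: "i \<in> {1..length gs}"
    have "{k \<in> {i+1..length gs}. th (gs ! (k - 1)) = \<beta>} = {k \<in> {i+1..length gs}. gs ! (k - 1) = m}"
      using beq thinj by auto
    then have "(\<Sum>k\<in>{k \<in> {i+1..length gs}. th (gs ! (k - 1)) = \<beta>}.
        copair (alpha_seq (map th gs) i) (alpha_seq (map th gs) k))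
      = (\<Sum>k\<in>{k \<in> {i+1..length gs}. gs ! (k - 1) = m}. copair (alpha_seq gs i) (alpha_seq gs k))"
    proof (rule sum.cong)
      fix k assume "k \<in> {k \<in> {i+1..length gs}. gs ! (k - 1) = m}"
      then have "1 \<le> k" "k \<le> length gs" using i by auto
      then show "copair (alpha_seq (map th gs) i) (alpha_seq (map th gs) k) = copair (alpha_seq gs i) (alpha_seq gs k)"
        using aseq i isom_copair[OF th_isom] by auto
    qed
    also have "\<dots> = (if gs ! (i - 1) \<noteq> m then 1 else 0)"
      using main_untwisted[OF m mins assms(6) assms(7) assms(8) assms(9)] i by auto
    also have "\<dots> = (if th (gs ! (i - 1)) \<noteq> \<beta> then 1 else 0)" using beq thinj by simp
    finally show "(\<Sum>k\<in>{k \<in> {i+1..length gs}. th (gs ! (k - 1)) = \<beta>}.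
        copair (alpha_seq (map th gs) i) (alpha_seq (map th gs) k))
      = (if th (gs ! (i - 1)) \<noteq> \<beta> then 1 else 0)" .
  qed
qed

end
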